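(* Let $r\ge 1$ and consider the polynomial algebra $\mathbb{C}[a_u: u\in\mathbb{F}_2^r\setminus\{\mathbf{0}\}]$. Then $$\operatorname{span}_{\mathbb{Z}}\Big\{\sum_{u:\,u\cdot v=1}a_u\ \Big|\ v\in\mathbb{F}_2^r\Big\}=\operatorname{span}_{\mathbb{Z}}\Big\{2^{|S|-1}\sum_{u:\,u_S=d}a_u\ \Big|\ \emptyset\neq S\subseteq[r],\ d\in\mathbb{F}_2^{|S|}\setminus\{\mathbf{0}\}\Big\}.$$
   Context: $[r]=\{1,\dots,r\}$. All sums range over $u\in\mathbb{F}_2^r\setminus\{\mathbf{0}\}$ (the conditions force $u\neq\mathbf{0}$). For $S\subseteq[r]$ and $d\in\mathbb{F}_2^{|S|}$, $u_S=d$ means that the coordinates of $u$ indexed by $S$, listed in increasing order of index, equal the entries of $d$. *)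

theory Defs
  imports Complex_Main
begin

text \<open>A vector u in F_2^r is encoded by its support: a set u of indices with u \<subseteq> {1..r};
  coordinate i of u is 1 iff i \<in> u.\<close>

definition F2vec :: "nat \<Rightarrow> nat set set" where
  "F2vec r = {u. u \<subseteq> {1..r}}"

definition idx :: "nat \<Rightarrow> nat set set" where
  "idx r = {u. u \<subseteq> {1..r} \<and> u \<noteq> {}}"

definition dot_one :: "nat set \<Rightarrow> nat set \<Rightarrow> bool" where
  "dot_one u v \<longleftrightarrow> odd (card (u \<inter> v))"

definition restr_eq :: "nat set \<Rightarrow> nat set \<Rightarrow> bool list \<Rightarrow> bool" where
  "restr_eq u S d \<longleftrightarrow> map (\<lambda>i. i \<in> u) (sorted_list_of_set S) = d"

text \<open>A linear form \<Sum>_{u \<in> idx r, P u} a_u in C[a_u], represented by its coefficient function.\<close>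
definition lin_form :: "nat \<Rightarrow> (nat set \<Rightarrow> bool) \<Rightarrow> (nat set \<Rightarrow> complex)" where
  "lin_form r P = (\<lambda>u. if u \<in> idx r \<and> P u then 1 else 0)"

definition int_span :: "(nat set \<Rightarrow> complex) set \<Rightarrow> (nat set \<Rightarrow> complex) set" where
  "int_span G = {x. \<exists>F c. finite F \<and> F \<subseteq> G \<and>
      x = (\<lambda>u. \<Sum>g\<in>F. of_int (c g) * g u)}"

end

theory Submission
  imports Defs
begin

lemma span_zero: "(\<lambda>u. 0) \<in> int_span H"
  unfolding int_span_def by (rule CollectI, rule exI[of _ "{}"]) auto

lemma span_base: "g \<in> H \<Longrightarrow> g \<in> int_span H"
  unfolding int_span_def by (rule CollectI, rule exI[of _ "{g}"], rule exI[of _ "\<lambda>_. 1"]) auto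

lemma span_add:
  assumes "x \<in> int_span H" "y \<in> int_span H"
  shows "(\<lambda>u. x u + y u) \<in> int_span H"
proof -
  obtain F c where F: "finite F" "F \<subseteq> H" "x = (\<lambda>u. \<Sum>g\<in>F. of_int (c g) * g u)"
    using assms(1) unfolding int_span_def by blast
  obtain F' c' where F': "finite F'" "F' \<subseteq> H" "y = (\<lambda>u. \<Sum>g\<in>F'. of_int (c' g) * g u)"
    using assms(2) unfolding int_span_def by blast
  define e where "e g = (if g \<in> F then c g else 0) + (if g \<in> F' then c' g else 0)" for g
  have "(\<lambda>u. x u + y u) = (\<lambda>u. \<Sum>g\<in>F \<union> F'. of_int (e g) * g u)"
  proof
    fix u
    have "(\<Sum>g\<in>F \<union> F'. of_int (e g) * g u) =
      (\<Sum>g\<in>F \<union> F'. (if g \<in> F then of_int (c g) * g u else 0)) + (\<Sum>g\<in>F \<union> F'. (if g \<in> F' then of_int (c' g) * g u else 0))"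
      unfolding e_def sum.distrib[symmetric] by (intro sum.cong) (auto simp: distrib_right)
    also have "(\<Sum>g\<in>F \<union> F'. (if g \<in> F then of_int (c g) * g u else 0)) = (\<Sum>g\<in>F. of_int (c g) * g u)"
      using F(1) F'(1) by (subst sum.inter_filter[symmetric]) (auto intro: sum.cong)
    also have "(\<Sum>g\<in>F \<union> F'. (if g \<in> F' then of_int (c' g) * g u else 0)) = (\<Sum>g\<in>F'. of_int (c' g) * g u)"
      using F(1) F'(1) by (subst sum.inter_filter[symmetric]) (auto intro: sum.cong)
    finally show "x u + y u = (\<Sum>g\<in>F \<union> F'. of_int (e g) * g u)" using F(3) F'(3) by simp
  qed
  then show ?thesis unfolding int_span_def using F(1,2) F'(1,2)
    by (intro CollectI exI[of _ "F \<union> F'"] exI[of _ e]) simp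
qed

lemma span_smult:
  assumes "x \<in> int_span H"
  shows "(\<lambda>u. of_int k * x u) \<in> int_span H"
proof -
  obtain F c where F: "finite F" "F \<subseteq> H" "x = (\<lambda>u. \<Sum>g\<in>F. of_int (c g) * g u)"
    using assms(1) unfolding int_span_def by blast
  have "(\<lambda>u. of_int k * x u) = (\<lambda>u. \<Sum>g\<in>F. of_int (k * c g) * g u)"
    using F(3) by (auto simp: sum_distrib_left mult.assoc)
  then show ?thesis unfolding int_span_def using F(1,2)
    by (intro CollectI exI[of _ F] exI[of _ "\<lambda>g. k * c g"]) simp
qed

lemma span_sum:
  assumes "finite I" "\<forall>i\<in>I. f i \<in> int_span H"
  shows "(\<lambda>u. \<Sum>i\<in>I. of_int (k i) * f i u) \<in> int_span H"
  using assms
proof (induction I rule: finite_induct)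
  case empty
  then show ?case using span_zero by simp
next
  case (insert a I)
  have "(\<lambda>u. of_int (k a) * f a u + (\<Sum>i\<in>I. of_int (k i) * f i u)) \<in> int_span H"
    using insert by (intro span_add span_smult) auto
  then show ?case using insert by simp
qed

lemma span_mono:
  assumes "G \<subseteq> int_span H"
  shows "int_span G \<subseteq> int_span H"
proof
  fix x assume "x \<in> int_span G"
  then obtain F c where F: "finite F" "F \<subseteq> G" "x = (\<lambda>u. \<Sum>g\<in>F. of_int (c g) * g u)"
    unfolding int_span_def by blast
  show "x \<in> int_span H" unfolding F(3) using F assms by (intro span_sum) auto
qed

lemma char_sum:
  fixes X :: "nat set"
  assumes "finite S"
  shows "(\<Sum>w\<in>Pow S. (-1::complex) ^ card (w \<inter> X)) = (if X \<inter> S = {} then 2 ^ card S else 0)"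
  using assms
proof (induction S rule: finite_induct)
  case empty
  then show ?case by simp
next
  case (insert a S)
  have "(\<Sum>w\<in>Pow (insert a S). (-1::complex) ^ card (w \<inter> X)) =
     (\<Sum>w\<in>Pow S. (-1::complex) ^ card (w \<inter> X)) + (\<Sum>w\<in>insert a ` Pow S. (-1::complex) ^ card (w \<inter> X))"
    unfolding Pow_insert by (rule sum.union_disjoint) (use insert.hyps in auto)
  also have "(\<Sum>w\<in>insert a ` Pow S. (-1::complex) ^ card (w \<inter> X)) = (\<Sum>w\<in>Pow S. (-1::complex) ^ card (insert a w \<inter> X))"
    by (rule sum.reindex_cong[where l="insert a"]) (use insert.hyps in \<open>auto simp: inj_on_def\<close>)
  finally have e: "(\<Sum>w\<in>Pow (insert a S). (-1::complex) ^ card (w \<inter> X)) =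
     (\<Sum>w\<in>Pow S. (-1::complex) ^ card (w \<inter> X)) + (\<Sum>w\<in>Pow S. (-1::complex) ^ card (insert a w \<inter> X))" .
  show ?case
  proof (cases "a \<in> X")
    case True
    have "(\<Sum>w\<in>Pow S. (-1::complex) ^ card (insert a w \<inter> X)) = (\<Sum>w\<in>Pow S. - ((-1::complex) ^ card (w \<inter> X)))"
    proof (rule sum.cong)
      fix w assume w: "w \<in> Pow S"
      have "insert a w \<inter> X = insert a (w \<inter> X)" using True by auto
      moreover have "a \<notin> w \<inter> X" using w insert.hyps by auto
      moreover have "finite (w \<inter> X)" using w insert.hyps finite_subset by blast
      ultimately show "(-1::complex) ^ card (insert a w \<inter> X) = - ((-1::complex) ^ card (w \<inter> X))" by simp
    qed simp
    then show ?thesis using e True by (simp add: sum_negf)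
  next
    case False
    have "(\<Sum>w\<in>Pow S. (-1::complex) ^ card (insert a w \<inter> X)) = (\<Sum>w\<in>Pow S. ((-1::complex) ^ card (w \<inter> X)))"
      by (rule sum.cong) (use False in auto)
    then show ?thesis using e False insert by auto
  qed
qed

lemma neg2_sum:
  assumes "finite A"
  shows "(\<Sum>T\<in>Pow A. (-2::complex) ^ card T) = (-1) ^ card A"
  using assms
proof (induction A rule: finite_induct)
  case empty
  then show ?case by simp
next
  case (insert a S)
  have "(\<Sum>w\<in>Pow (insert a S). (-2::complex) ^ card w) =
     (\<Sum>w\<in>Pow S. (-2::complex) ^ card w) + (\<Sum>w\<in>insert a ` Pow S. (-2::complex) ^ card w)"
    unfolding Pow_insert by (rule sum.union_disjoint) (use insert.hyps in auto)
  also have "(\<Sum>w\<in>insert a ` Pow S. (-2::complex) ^ card w) = (\<Sum>w\<in>Pow S. (-2::complex) ^ card (insert a w))"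
    by (rule sum.reindex_cong[where l="insert a"]) (use insert.hyps in \<open>auto simp: inj_on_def\<close>)
  also have "\<dots> = (\<Sum>w\<in>Pow S. (-2) * (-2::complex) ^ card w)"
  proof (rule sum.cong)
    fix w assume w: "w \<in> Pow S"
    then have "finite w" "a \<notin> w" using insert.hyps finite_subset by auto
    then show "(-2::complex) ^ card (insert a w) = (-2) * (-2::complex) ^ card w" by simp
  qed simp
  also have "\<dots> = (-2) * (\<Sum>w\<in>Pow S. (-2::complex) ^ card w)"
    by (rule sum_distrib_left[symmetric])
  finally show ?case using insert by simp
qed

lemma odd_sum:
  assumes "finite A"
  shows "(\<Sum>T\<in>Pow A - {{}}. (-1::complex) ^ (card T + 1) * 2 ^ (card T - 1)) = (if odd (card A) then 1 else 0)"
proof -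
  have "(\<Sum>T\<in>Pow A - {{}}. (-1::complex) ^ (card T + 1) * 2 ^ (card T - 1)) = (\<Sum>T\<in>Pow A - {{}}. - ((-2::complex) ^ card T) / 2)"
  proof (rule sum.cong)
    fix T assume T: "T \<in> Pow A - {{}}"
    then have "card T > 0" using assms finite_subset by fastforce
    then obtain m where "card T = Suc m" using gr0_implies_Suc by blast
    then show "(-1::complex) ^ (card T + 1) * 2 ^ (card T - 1) = - ((-2::complex) ^ card T) / 2"
      by (simp add: power_minus[of "2::complex"])
  qed simp
  also have "\<dots> = - (\<Sum>T\<in>Pow A - {{}}. (-2::complex) ^ card T) / 2"
    by (simp add: sum_negf sum_divide_distrib)
  also have "(\<Sum>T\<in>Pow A - {{}}. (-2::complex) ^ card T) = (-1) ^ card A - 1"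
    using assms by (simp add: sum_diff1 neg2_sum)
  finally show ?thesis by auto
qed


lemma restr_eq_set:
  assumes "finite S" "length d = card S"
  defines "D \<equiv> {sorted_list_of_set S ! i | i. i < card S \<and> d ! i}"
  shows "restr_eq u S d \<longleftrightarrow> u \<inter> S = D" and "D \<subseteq> S"
    and "d \<noteq> replicate (card S) False \<Longrightarrow> D \<noteq> {}"
proof -
  let ?xs = "sorted_list_of_set S"
  have len: "length ?xs = card S" using assms by simp
  have dist: "distinct ?xs" by simp
  have set: "set ?xs = S" using assms by simp
  have memD: "?xs ! i \<in> D \<longleftrightarrow> d ! i" if "i < card S" for i
  proof
    assume "?xs ! i \<in> D"
    then obtain j where j: "j < card S" "d ! j" "?xs ! i = ?xs ! j" unfolding D_def by blast
    then have "i = j" using dist len that nth_eq_iff_index_eq by metis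
    then show "d ! i" using j by simp
  qed (use that in \<open>auto simp: D_def\<close>)
  show DS: "D \<subseteq> S" unfolding D_def using set len nth_mem by fastforce
  have "restr_eq u S d \<longleftrightarrow> (\<forall>i<card S. (?xs ! i \<in> u) = d ! i)"
    unfolding restr_eq_def using len assms(2) by (auto simp: list_eq_iff_nth_eq)
  also have "\<dots> \<longleftrightarrow> (\<forall>i<card S. (?xs ! i \<in> u) = (?xs ! i \<in> D))" using memD by auto
  also have "\<dots> \<longleftrightarrow> (\<forall>x\<in>S. (x \<in> u) = (x \<in> D))" using set len by (metis in_set_conv_nth)
  also have "\<dots> \<longleftrightarrow> u \<inter> S = D" using DS by auto
  finally show "restr_eq u S d \<longleftrightarrow> u \<inter> S = D" .
  show "D \<noteq> {}" if "d \<noteq> replicate (card S) False"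
  proof
    assume "D = {}"
    then have "\<forall>i<card S. \<not> d ! i" using memD by auto
    then have "d = replicate (card S) False" using assms(2) by (auto simp: list_eq_iff_nth_eq)
    then show False using that by simp
  qed
qed

lemma restr_eq_all:
  assumes "finite T"
  shows "restr_eq u T (replicate (card T) True) \<longleftrightarrow> T \<subseteq> u"
proof -
  have "{sorted_list_of_set T ! i | i. i < card T \<and> replicate (card T) True ! i} = T"
  proof -
    have "{sorted_list_of_set T ! i | i. i < card T \<and> replicate (card T) True ! i}
       = {sorted_list_of_set T ! i | i. i < length (sorted_list_of_set T)}" using assms by auto
    also have "\<dots> = set (sorted_list_of_set T)" by (auto simp: in_set_conv_nth)
    finally show ?thesis using assms by simp
  qed
  then show ?thesis using restr_eq_set(1)[OF assms, of "replicate (card T) True" u] by auto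
qed

lemma parity:
  assumes "finite w"
  shows "(-1::complex) ^ card (w \<inter> A) * (-1) ^ card (w \<inter> B) = (-1) ^ card (w \<inter> ((A - B) \<union> (B - A)))"
proof -
  have f: "finite (w \<inter> A)" "finite (w \<inter> B)" using assms by auto
  have "card (w \<inter> A) = card (w \<inter> (A - B)) + card (w \<inter> A \<inter> B)"
    using f assms by (subst card_Un_disjoint[symmetric]) (auto intro: arg_cong[where f=card])
  moreover have "card (w \<inter> B) = card (w \<inter> (B - A)) + card (w \<inter> A \<inter> B)"
    using f assms by (subst card_Un_disjoint[symmetric]) (auto intro: arg_cong[where f=card])
  moreover have "card (w \<inter> ((A - B) \<union> (B - A))) = card (w \<inter> (A - B)) + card (w \<inter> (B - A))"
    using f assms by (subst card_Un_disjoint[symmetric]) (auto intro: arg_cong[where f=card])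
  ultimately have "card (w \<inter> A) + card (w \<inter> B) = card (w \<inter> ((A - B) \<union> (B - A))) + 2 * card (w \<inter> A \<inter> B)"
    by simp
  then have "(-1::complex) ^ (card (w \<inter> A) + card (w \<inter> B)) = (-1) ^ (card (w \<inter> ((A - B) \<union> (B - A))) + 2 * card (w \<inter> A \<inter> B))"
    by (rule arg_cong)
  then show ?thesis by (simp only: power_add power_mult) simp
qed


lemma odd_ind: "(if odd k then 1 else 0 :: complex) = (1 - (-1) ^ k) / 2"
  by auto

theorem mainTheorem9:
  fixes r :: nat
  assumes "r \<ge> 1"
  shows "int_span {lin_form r (\<lambda>u. dot_one u v) | v. v \<in> F2vec r}
       = int_span {(\<lambda>u. 2 ^ (card S - 1) * lin_form r (\<lambda>u. restr_eq u S d) u) | S d.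
            S \<noteq> {} \<and> S \<subseteq> {1..r} \<and> length d = card S \<and> d \<noteq> replicate (card S) False}"
    (is "int_span ?G = int_span ?H")
proof (rule antisym)
  show "int_span ?G \<subseteq> int_span ?H"
  proof (rule span_mono, rule subsetI)
    fix x assume "x \<in> ?G"
    then obtain v where v: "v \<in> F2vec r" "x = lin_form r (\<lambda>u. dot_one u v)" by blast
    have vr: "v \<subseteq> {1..r}" using v unfolding F2vec_def by auto
    then have fv: "finite v" using finite_subset by blast
    define M where "M T = (\<lambda>u. 2 ^ (card T - 1) * lin_form r (\<lambda>u. restr_eq u T (replicate (card T) True)) u)" for T
    have Min: "\<forall>T\<in>Pow v - {{}}. M T \<in> int_span ?H"
    proof
      fix T assume T: "T \<in> Pow v - {{}}"
      then have "finite T" "T \<noteq> {}" using fv finite_subset by auto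
      then have "card T > 0" by auto
      then have "replicate (card T) True \<noteq> replicate (card T) False" by (cases "card T") auto
      moreover have "T \<subseteq> {1..r}" using T vr by auto
      ultimately have "M T \<in> ?H" unfolding M_def
        by (intro CollectI exI[of _ T] exI[of _ "replicate (card T) True"]) (simp add: \<open>T \<noteq> {}\<close>)
      then show "M T \<in> int_span ?H" by (rule span_base)
    qed
    have xeq: "x = (\<lambda>u. \<Sum>T\<in>Pow v - {{}}. of_int ((-1) ^ (card T + 1)) * M T u)"
    proof
      fix u
      show "x u = (\<Sum>T\<in>Pow v - {{}}. of_int ((-1) ^ (card T + 1)) * M T u)"
      proof (cases "u \<in> idx r")
        case False
        then show ?thesis unfolding v(2) M_def lin_form_def by simp
      next
        case True
        have "(\<Sum>T\<in>Pow v - {{}}. of_int ((-1) ^ (card T + 1)) * M T u)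
          = (\<Sum>T\<in>Pow v - {{}}. (if T \<subseteq> u then (-1::complex) ^ (card T + 1) * 2 ^ (card T - 1) else 0))"
        proof (rule sum.cong)
          fix T assume T: "T \<in> Pow v - {{}}"
          then have "finite T" using fv finite_subset by auto
          then show "of_int ((-1) ^ (card T + 1)) * M T u = (if T \<subseteq> u then (-1::complex) ^ (card T + 1) * 2 ^ (card T - 1) else 0)"
            unfolding M_def lin_form_def using True by (simp add: restr_eq_all)
        qed simp
        also have "\<dots> = (\<Sum>T\<in>{T \<in> Pow v - {{}}. T \<subseteq> u}. (-1::complex) ^ (card T + 1) * 2 ^ (card T - 1))"
          using fv by (intro sum.inter_filter[symmetric]) auto
        also have "{T \<in> Pow v - {{}}. T \<subseteq> u} = Pow (u \<inter> v) - {{}}" by auto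
        also have "(\<Sum>T\<in>Pow (u \<inter> v) - {{}}. (-1::complex) ^ (card T + 1) * 2 ^ (card T - 1)) = (if odd (card (u \<inter> v)) then 1 else 0)"
          using fv by (intro odd_sum) auto
        finally show ?thesis unfolding v(2) lin_form_def dot_one_def using True by simp
      qed
    qed
    show "x \<in> int_span ?H" unfolding xeq by (rule span_sum) (use fv Min in auto)
  qed
next
  show "int_span ?H \<subseteq> int_span ?G"
  proof (rule span_mono, rule subsetI)
    fix x assume "x \<in> ?H"
    then obtain S d where Sd: "S \<noteq> {}" "S \<subseteq> {1..r}" "length d = card S" "d \<noteq> replicate (card S) False"
      and x: "x = (\<lambda>u. 2 ^ (card S - 1) * lin_form r (\<lambda>u. restr_eq u S d) u)" by blast
    have fS: "finite S" using Sd(2) finite_subset by blast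
    define D where "D = {sorted_list_of_set S ! i | i. i < card S \<and> d ! i}"
    have DS: "D \<subseteq> S" and Dne: "D \<noteq> {}" and req: "\<And>u. restr_eq u S d \<longleftrightarrow> u \<inter> S = D"
      using restr_eq_set[OF fS Sd(3)] Sd(4) unfolding D_def by auto
    define L where "L w = lin_form r (\<lambda>u. dot_one u w)" for w
    have Lin: "\<forall>w\<in>Pow S. L w \<in> int_span ?G"
    proof
      fix w assume "w \<in> Pow S"
      then have "L w \<in> ?G" unfolding L_def F2vec_def using Sd(2) by auto
      then show "L w \<in> int_span ?G" by (rule span_base)
    qed
    have xeq: "x = (\<lambda>u. \<Sum>w\<in>Pow S. of_int (- ((-1) ^ card (w \<inter> D))) * L w u)"
    proof
      fix u
      show "x u = (\<Sum>w\<in>Pow S. of_int (- ((-1) ^ card (w \<inter> D))) * L w u)"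
      proof (cases "u \<in> idx r")
        case False
        then show ?thesis unfolding x L_def lin_form_def by simp
      next
        case True
        define X where "X = (D - u) \<union> (u - D)"
        have "(\<Sum>w\<in>Pow S. of_int (- ((-1) ^ card (w \<inter> D))) * L w u)
          = (\<Sum>w\<in>Pow S. (- ((-1::complex) ^ card (w \<inter> D)) + (-1) ^ card (w \<inter> X)) / 2)"
        proof (rule sum.cong)
          fix w assume w: "w \<in> Pow S"
          then have fw: "finite w" using fS finite_subset by auto
          have "of_int (- ((-1) ^ card (w \<inter> D))) * L w u
             = - ((-1::complex) ^ card (w \<inter> D)) * ((1 - (-1) ^ card (w \<inter> u)) / 2)"
            unfolding L_def lin_form_def dot_one_def odd_ind[symmetric] using True by (simp add: Int_commute)
          also have "\<dots> = (- ((-1::complex) ^ card (w \<inter> D)) + (-1) ^ card (w \<inter> D) * (-1) ^ card (w \<inter> u)) / 2"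
            by (simp add: algebra_simps)
          also have "(-1::complex) ^ card (w \<inter> D) * (-1) ^ card (w \<inter> u) = (-1) ^ card (w \<inter> X)"
            unfolding X_def by (rule parity[OF fw])
          finally show "of_int (- ((-1) ^ card (w \<inter> D))) * L w u = (- ((-1::complex) ^ card (w \<inter> D)) + (-1) ^ card (w \<inter> X)) / 2" .
        qed simp
        also have "\<dots> = (- (\<Sum>w\<in>Pow S. (-1::complex) ^ card (w \<inter> D)) + (\<Sum>w\<in>Pow S. (-1::complex) ^ card (w \<inter> X))) / 2"
          by (simp add: sum_divide_distrib[symmetric] sum.distrib sum_negf sum_subtractf)
        also have "\<dots> = (if X \<inter> S = {} then 2 ^ card S else 0) / 2"
          using char_sum[OF fS, of D] char_sum[OF fS, of X] DS Dne by auto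
        also have "\<dots> = 2 ^ (card S - 1) * (if u \<inter> S = D then 1 else 0)"
        proof -
          have "X \<inter> S = {} \<longleftrightarrow> u \<inter> S = D" unfolding X_def using DS by auto
          moreover have "card S > 0" using fS Sd(1) by auto
          ultimately show ?thesis by (cases "card S") auto
        qed
        finally show ?thesis unfolding x lin_form_def using True req by simp
      qed
    qed
    show "x \<in> int_span ?G" unfolding xeq by (rule span_sum) (use fS Lin in auto)
  qed
qed

end
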